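(* Under the hypotheses of Theorem 4 (either case (i) or case (ii)), the solution also satisfies \[ \lim_{t\to\infty}\frac{x(t)}{F^{-1}(t)}=+\infty\qquad\text{and}\qquad\lim_{t\to\infty}\frac{F(x(t))}{t}=0. \] Here Theorem 4's hypotheses are: $f\in C(\mathbb{R};\mathbb{R})$ locally Lipschitz with $f(0)=0$, $xf(x)>0$ for $x\neq0$; $g\in C([0,\infty);\mathbb{R})$ with $g(t)>0$ for $t>0$; $\xi>0$; $x$ is the unique continuous solution of $x'(t)=-f(x(t))+g(t)$, $x(0)=\xi$, and $x(t)\to0$; $\lim_{t\to\infty}g(t)/f(F^{-1}(t))=+\infty$; $f\in\mathrm{RV}_0(\beta)$ with $\beta>1$; $g\in\mathrm{RV}_\infty(-\theta)$ with either $\theta>0$, or $\theta=0$ and $g$ asymptotic to a decreasing function.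
   Context: $F(x)=\int_x^1 \frac{du}{f(u)}$ for $x>0$, strictly decreasing with inverse $F^{-1}$. $\mathrm{RV}_0(\beta)$: measurable positive $\varphi$ on $(0,\infty)$ with $\varphi(\lambda x)/\varphi(x)\to\lambda^\beta$ as $x\to0^+$ for every $\lambda>0$. $\mathrm{RV}_\infty(\alpha)$: measurable positive $h$ with $h(\lambda t)/h(t)\to\lambda^\alpha$ as $t\to\infty$ for every $\lambda>0$. *)

theory Defs
  imports "HOL-Analysis.Analysis" "HOL-Library.Landau_Symbols"
begin

definition loc_lipschitz :: "(real \<Rightarrow> real) \<Rightarrow> bool" where
  "loc_lipschitz f \<longleftrightarrow> (\<forall>u. \<exists>\<delta>>0. \<exists>L. \<forall>a b. \<bar>a - u\<bar> < \<delta> \<longrightarrow> \<bar>b - u\<bar> < \<delta> \<longrightarrow>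
      \<bar>f a - f b\<bar> \<le> L * \<bar>a - b\<bar>)"

definition Fint :: "(real \<Rightarrow> real) \<Rightarrow> real \<Rightarrow> real" where
  "Fint f x = (if x \<le> 1 then integral {x..1} (\<lambda>u. 1 / f u)
               else - integral {1..x} (\<lambda>u. 1 / f u))"

definition Finv :: "(real \<Rightarrow> real) \<Rightarrow> real \<Rightarrow> real" where
  "Finv f t = (THE y. 0 < y \<and> Fint f y = t)"

definition RV0 :: "(real \<Rightarrow> real) \<Rightarrow> real \<Rightarrow> bool" where
  "RV0 \<phi> \<beta> \<longleftrightarrow> \<phi> \<in> borel_measurable (restrict_space borel {0<..}) \<and> (\<forall>x>0. \<phi> x > 0) \<and>
     (\<forall>c>0. ((\<lambda>x. \<phi> (c * x) / \<phi> x) \<longlongrightarrow> c powr \<beta>) (at_right 0))"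

definition RVinf :: "(real \<Rightarrow> real) \<Rightarrow> real \<Rightarrow> bool" where
  "RVinf h \<alpha> \<longleftrightarrow> h \<in> borel_measurable (restrict_space borel {0<..}) \<and> (\<forall>t>0. h t > 0) \<and>
     (\<forall>c>0. ((\<lambda>t. h (c * t) / h t) \<longlongrightarrow> c powr \<alpha>) at_top)"

end

theory Submission
  imports Defs
begin


lemma Fint_deriv:
  assumes cont: "continuous_on {0<..} (\<lambda>u. 1 / f u)" and u: "u > 0"
  shows "(Fint f has_real_derivative -(1 / f u)) (at u)"
proof -
  define h where "h = (\<lambda>u. 1 / f u)"
  define a where "a = min (u/2) (1/2)"
  define b where "b = max (2*u) 2"
  have a: "0 < a" "a < u" "a \<le> 1" using u by (auto simp: a_def)
  have b: "u < b" "1 < b" using u by (auto simp: b_def)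
  have cab: "continuous_on {a..b} h"
    unfolding h_def by (rule continuous_on_subset[OF cont]) (use a in auto)
  have intg: "h integrable_on {c..d}" if "a \<le> c" "d \<le> b" for c d
    by (rule integrable_continuous_interval, rule continuous_on_subset[OF cab]) (use that in auto)
  have rep: "Fint f w = integral {a..1} h - integral {a..w} h" if "w \<in> {a<..<b}" for w
  proof (cases "w \<le> 1")
    case True
    have "integral {a..w} h + integral {w..1} h = integral {a..1} h"
      using Henstock_Kurzweil_Integration.integral_combine[where f=h and a=a and c=w and b=1] intg[of a 1] that True a b by auto
    then show ?thesis using True by (simp add: Fint_def h_def)
  next
    case False
    have "integral {a..1} h + integral {1..w} h = integral {a..w} h"
      using Henstock_Kurzweil_Integration.integral_combine[where f=h and a=a and c=1 and b=w] intg[of a w] that False a b by auto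
    then show ?thesis using False by (simp add: Fint_def h_def)
  qed
  have "((\<lambda>w. integral {a..w} h) has_real_derivative h u) (at u within {a..b})"
    by (rule integral_has_real_derivative[OF cab]) (use a b in auto)
  then have "((\<lambda>w. integral {a..w} h) has_real_derivative h u) (at u)"
    using a b by (subst (asm) at_within_interior) auto
  then have "((\<lambda>w. integral {a..1} h - integral {a..w} h) has_real_derivative -h u) (at u)"
    by (auto intro!: derivative_eq_intros)
  then have "((\<lambda>w. integral {a..1} h - integral {a..w} h) has_real_derivative -(1/f u)) (at u)"
    by (simp add: h_def)
  then show ?thesis
    by (rule has_field_derivative_transform_within_open[where S="{a<..<b}"])
       (use a b rep in auto)
qed

locale fctx =
  fixes f :: "real \<Rightarrow> real" and \<beta> :: real
  assumes fc: "continuous_on UNIV f"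
    and fpos: "\<And>u. u > 0 \<Longrightarrow> f u > 0"
    and frv: "\<And>c. c > 0 \<Longrightarrow> ((\<lambda>u. f (c * u) / f u) \<longlongrightarrow> c powr \<beta>) (at_right 0)"
    and bgt: "\<beta> > 1"
begin

lemma cont1f: "continuous_on {0<..} (\<lambda>u. 1 / f u)"
  by (intro continuous_intros continuous_on_subset[OF fc]) (auto dest: fpos)

lemma Fd: "u > 0 \<Longrightarrow> (Fint f has_real_derivative -(1 / f u)) (at u)"
  by (rule Fint_deriv[OF cont1f])

lemma F_strict: assumes "0 < a" "a < b" shows "Fint f b < Fint f a"
proof -
  have "Fint f a > Fint f b"
    by (rule DERIV_neg_imp_decreasing[OF assms(2)])
       (use assms in \<open>auto intro!: exI Fd fpos\<close>)
  then show ?thesis by simp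
qed

lemma F_less_iff: "0 < a \<Longrightarrow> 0 < b \<Longrightarrow> Fint f a < Fint f b \<longleftrightarrow> b < a"
  by (metis F_strict linorder_neqE_linordered_idom order_less_asym order_less_irrefl)

lemma F_le_iff: "0 < a \<Longrightarrow> 0 < b \<Longrightarrow> Fint f a \<le> Fint f b \<longleftrightarrow> b \<le> a"
  by (meson F_less_iff not_le)

lemma F_cont: "continuous_on {0<..} (Fint f)"
  by (rule continuous_at_imp_continuous_on) (auto intro: DERIV_isCont Fd)

lemma F1: "Fint f 1 = 0" by (simp add: Fint_def)

lemma F_nonneg: "0 < u \<Longrightarrow> u \<le> 1 \<Longrightarrow> Fint f u \<ge> 0"
  using F_le_iff[of 1 u] F1 by simp

lemma Finv_eq: assumes "0 < v" shows "Finv f (Fint f v) = v"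
  unfolding Finv_def
  by (rule the_equality) (use assms F_less_iff in \<open>auto, metis linorder_neqE_linordered_idom less_irrefl\<close>)

lemma ratio_upper: assumes "c > 0" "K > c powr \<beta>"
  shows "\<exists>\<delta>>0. \<forall>u. 0 < u \<and> u < \<delta> \<longrightarrow> f (c * u) \<le> K * f u"
proof -
  have "eventually (\<lambda>u. f (c * u) / f u < K) (at_right 0)"
    by (rule order_tendstoD(2)[OF frv[OF assms(1)] assms(2)])
  moreover have "eventually (\<lambda>u. u > 0) (at_right (0::real))"
    by (simp add: eventually_at_right_less)
  ultimately have "eventually (\<lambda>u. f (c * u) \<le> K * f u) (at_right 0)"
    by eventually_elim (use fpos in \<open>auto simp: divide_less_eq\<close>)
  then show ?thesis unfolding eventually_at_right_field by auto
qed

lemma ratio_lower: assumes "c > 0" "k < c powr \<beta>"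
  shows "\<exists>\<delta>>0. \<forall>u. 0 < u \<and> u < \<delta> \<longrightarrow> k * f u \<le> f (c * u)"
proof -
  have "eventually (\<lambda>u. f (c * u) / f u > k) (at_right 0)"
    by (rule order_tendstoD(1)[OF frv[OF assms(1)] assms(2)])
  moreover have "eventually (\<lambda>u. u > 0) (at_right (0::real))"
    by (simp add: eventually_at_right_less)
  ultimately have "eventually (\<lambda>u. k * f u \<le> f (c * u)) (at_right 0)"
    by eventually_elim (use fpos in \<open>auto simp: less_divide_eq\<close>)
  then show ?thesis unfolding eventually_at_right_field by auto
qed

lemma scale_ge:
  assumes c: "c > 0" and K: "K > 0" and v: "0 < v" "v \<le> d"
    and bd: "\<And>u. v \<le> u \<Longrightarrow> u \<le> d \<Longrightarrow> f (c * u) \<le> K * f u"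
  shows "Fint f (c * v) - Fint f (c * d) \<ge> (c / K) * (Fint f v - Fint f d)"
proof -
  define \<phi> where "\<phi> = (\<lambda>w. Fint f (c * w) - (c / K) * Fint f w)"
  have "\<phi> d \<le> \<phi> v"
  proof (rule deriv_nonpos_imp_antimono[where g=\<phi> and a=v and b=d and g' = "\<lambda>w. -(1 / f (c * w)) * c - (c / K) * -(1 / f w)"])
    fix w assume w: "w \<in> {v..d}"
    then have wp: "w > 0" using v by auto
    have l: "((\<lambda>w. c*w) has_real_derivative c) (at w)" by (auto intro!: derivative_eq_intros)
    have d1: "((\<lambda>w. Fint f (c*w)) has_real_derivative -(1/f(c*w)) * c) (at w)"
      by (rule DERIV_chain2[OF Fd l]) (use wp c in simp)
    have d2: "(Fint f has_real_derivative -(1/f w)) (at w)" by (rule Fd[OF wp])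
    show "(\<phi> has_real_derivative -(1 / f (c * w)) * c - (c / K) * -(1 / f w)) (at w)"
      using DERIV_diff[OF d1 DERIV_cmult[OF d2, of "c/K"]] by (simp add: \<phi>_def)
    have fw: "f w > 0" "f (c * w) > 0" using wp c fpos by auto
    have "f (c * w) \<le> K * f w" using bd w by auto
    then have "c / (K * f w) \<le> c / f (c * w)"
      using fw c K by (intro divide_left_mono) auto
    then show "-(1 / f (c * w)) * c - (c / K) * -(1 / f w) \<le> 0" by simp
  qed (use v in auto)
  then show ?thesis unfolding \<phi>_def by (simp add: algebra_simps)
qed

lemma scale_le:
  assumes c: "c > 0" and k: "k > 0" and v: "0 < v" "v \<le> d"
    and bd: "\<And>u. v \<le> u \<Longrightarrow> u \<le> d \<Longrightarrow> k * f u \<le> f (c * u)"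
  shows "Fint f (c * v) - Fint f (c * d) \<le> (c / k) * (Fint f v - Fint f d)"
proof -
  define \<phi> where "\<phi> = (\<lambda>w. Fint f (c * w) - (c / k) * Fint f w)"
  have "\<phi> v \<le> \<phi> d"
  proof (rule deriv_nonneg_imp_mono[where g=\<phi> and a=v and b=d and g' = "\<lambda>w. -(1 / f (c * w)) * c - (c / k) * -(1 / f w)"])
    fix w assume w: "w \<in> {v..d}"
    then have wp: "w > 0" using v by auto
    have l: "((\<lambda>w. c*w) has_real_derivative c) (at w)" by (auto intro!: derivative_eq_intros)
    have d1: "((\<lambda>w. Fint f (c*w)) has_real_derivative -(1/f(c*w)) * c) (at w)"
      by (rule DERIV_chain2[OF Fd l]) (use wp c in simp)
    have d2: "(Fint f has_real_derivative -(1/f w)) (at w)" by (rule Fd[OF wp])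
    show "(\<phi> has_real_derivative -(1 / f (c * w)) * c - (c / k) * -(1 / f w)) (at w)"
      using DERIV_diff[OF d1 DERIV_cmult[OF d2, of "c/k"]] by (simp add: \<phi>_def)
    have fw: "f w > 0" "f (c * w) > 0" using wp c fpos by auto
    have "k * f w \<le> f (c * w)" using bd w by auto
    then have "c / f (c * w) \<le> c / (k * f w)"
      using fw c k by (intro divide_left_mono) auto
    then show "-(1 / f (c * w)) * c - (c / k) * -(1 / f w) \<ge> 0" by simp
  qed (use v in auto)
  then show ?thesis unfolding \<phi>_def by (simp add: algebra_simps)
qed

lemma F_infty: "\<exists>v. 0 < v \<and> v \<le> 1 \<and> t \<le> Fint f v"
proof -
  have "(1/2::real) powr \<beta> < (1/2) powr 1"
    by (rule powr_less_mono') (use bgt in auto)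
  then obtain \<delta>0 where d0: "\<delta>0 > 0" "\<And>u. 0 < u \<and> u < \<delta>0 \<Longrightarrow> f ((1/2) * u) \<le> (1/2) * f u"
    using ratio_upper[of "1/2" "1/2"] by auto
  define d where "d = min (\<delta>0/2) 1"
  have d: "0 < d" "d < \<delta>0" "d \<le> 1" using d0 by (auto simp: d_def)
  define a where "a = Fint f (d/2) - Fint f d"
  have a: "a > 0" using F_strict[of "d/2" d] d by (simp add: a_def)
  have ind: "Fint f (d / 2^n) \<ge> Fint f d + real n * a" for n
  proof (induction n)
    case 0 then show ?case by simp
  next
    case (Suc n)
    have v: "0 < d / 2^n" "d / 2^n \<le> d" using d by (auto simp: divide_le_eq)
    have "Fint f ((1/2) * (d / 2^n)) - Fint f ((1/2) * d) \<ge> ((1/2) / (1/2)) * (Fint f (d/2^n) - Fint f d)"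
    proof (rule scale_ge)
      fix u assume u: "d / 2^n \<le> u" "u \<le> d"
      have "0 < u" using u v by linarith
      then show "f ((1/2) * u) \<le> (1/2) * f u" using d0(2)[of u] u d by auto
    qed (use v d in auto)
    then have "Fint f (d / 2^Suc n) \<ge> Fint f (d/2^n) + a"
      by (simp add: a_def)
    then show ?case using Suc by (simp add: algebra_simps)
  qed
  obtain n where n: "t - Fint f d < real n * a" using ex_less_of_nat_mult[OF a] by blast
  have "(1::real) \<le> 2^n" by simp
  then have "d \<le> 2^n" using d by linarith
  then show ?thesis
    by (intro exI[of _ "d / 2^n"]) (use ind[of n] n d in \<open>auto simp: divide_le_eq\<close>)
qed

lemma Finv_props: assumes "t \<ge> 0"
  shows "0 < Finv f t \<and> Finv f t \<le> 1 \<and> Fint f (Finv f t) = t"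
proof -
  obtain v where v: "0 < v" "v \<le> 1" "t \<le> Fint f v" using F_infty by blast
  have "continuous_on {v..1} (Fint f)" by (rule continuous_on_subset[OF F_cont]) (use v in auto)
  then obtain w where w: "v \<le> w" "w \<le> 1" "Fint f w = t"
    using IVT2'[of "Fint f" 1 t v] v assms F1 by auto
  then have "Finv f t = w" using Finv_eq[of w] v by auto
  then show ?thesis using w v by auto
qed

lemma Finv_small: assumes "0 < d" "t \<ge> 0" "t > Fint f d" shows "Finv f t < d"
  using Finv_props[OF assms(2)] F_less_iff[of d "Finv f t"] assms by auto

lemma baire_interval:
  "\<exists>a b \<delta>0 K0. 1 \<le> a \<and> a < b \<and> \<delta>0 > 0 \<and> K0 > 0 \<and>
     (\<forall>c v. a \<le> c \<and> c \<le> b \<and> 0 < v \<and> v < \<delta>0 \<longrightarrow> f (c * v) \<le> K0 * f v \<and> f v \<le> K0 * f (c * v))"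
proof -
  define K0 where "K0 = 2 * 2 powr \<beta> + 2"
  have p2: "(0::real) < 2 powr \<beta>" by simp
  have K0: "K0 > 0" unfolding K0_def using p2 by linarith
  define A where "A n = {1..2} \<inter> {c. \<forall>v. 0 < v \<and> v < 1 / Suc n \<longrightarrow> f (c * v) \<le> K0 * f v \<and> f v \<le> K0 * f (c * v)}" for n :: nat
  have fcv: "continuous_on UNIV (\<lambda>c. f (c * v))" for v
    by (rule continuous_on_compose2[OF fc]) (auto intro!: continuous_intros)
  have closedA: "closed (A n)" for n
    unfolding A_def
    by (intro closed_Int closed_atLeastAtMost closed_Collect_all closed_Collect_imp closed_Collect_conj
          closed_Collect_le open_Collect_const continuous_intros fcv continuous_on_compose2[OF fc])
       auto
  have cover: "\<exists>n. c \<in> A n" if c: "c \<in> {1..2}" for c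
  proof -
    have "c powr \<beta> \<le> 2 powr \<beta>" using c bgt by (intro powr_mono2) auto
    then have "K0 > c powr \<beta>" unfolding K0_def using p2 by linarith
    then obtain d1 where d1: "d1 > 0" "\<And>u. 0 < u \<and> u < d1 \<Longrightarrow> f (c * u) \<le> K0 * f u"
      using ratio_upper[of c K0] c by auto
    have "1 \<le> c powr \<beta>" using c bgt by (simp add: ge_one_powr_ge_zero)
    then obtain d2 where d2: "d2 > 0" "\<And>u. 0 < u \<and> u < d2 \<Longrightarrow> (1/2) * f u \<le> f (c * u)"
      using ratio_lower[of c "1/2"] c by auto
    obtain n where n: "1 / Suc n < min d1 d2"
      using reals_Archimedean[of "min d1 d2"] d1 d2 by (auto simp: inverse_eq_divide)
    have "c \<in> A n"
      unfolding A_def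
    proof (intro IntI CollectI allI impI conjI)
      fix v assume v: "0 < v \<and> v < 1 / Suc n"
      show "f (c * v) \<le> K0 * f v" using d1(2)[of v] v n by auto
      have "f v \<le> 2 * f (c * v)" using d2(2)[of v] v n by auto
      moreover have "f (c * v) \<ge> 0" using fpos[of "c * v"] v c by auto
      moreover have "2 \<le> K0" unfolding K0_def using p2 by linarith
      ultimately show "f v \<le> K0 * f (c * v)"
        using mult_right_mono[of 2 K0 "f (c * v)"] by linarith
    qed (use c in auto)
    then show ?thesis by blast
  qed
  define S where "S = {1..2::real}"
  define G where "G = range (\<lambda>n. S - A n)"
  have "\<exists>n. \<not> S \<subseteq> closure (S - A n)"
  proof (rule ccontr)
    assume "\<not> ?thesis"
    then have dense: "\<And>n. S \<subseteq> closure (S - A n)" by blast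
    have "S \<subseteq> closure (\<Inter>G)"
    proof (rule Baire)
      show "closed S" by (simp add: S_def)
      show "countable G" by (simp add: G_def)
      fix T assume "T \<in> G"
      then obtain n where T: "T = S - A n" by (auto simp: G_def)
      have "openin (top_of_set S) (S - A n)"
        unfolding openin_open
        by (rule exI[of _ "- A n"]) (use closedA[of n] in \<open>auto simp: open_Compl\<close>)
      then show "openin (top_of_set S) T \<and> S \<subseteq> closure T" using dense T by auto
    qed
    moreover have "\<Inter>G = {}" using cover by (auto simp: G_def S_def)
    ultimately show False by (auto simp: S_def)
  qed
  then obtain n p where p: "p \<in> S" "p \<notin> closure (S - A n)" by blast
  then obtain e where e: "e > 0" "\<And>y. y \<in> S - A n \<Longrightarrow> \<not> dist y p < e"
    unfolding closure_approachable by blast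
  define a where "a = max 1 (p - e/2)"
  define b where "b = min 2 (p + e/2)"
  have ab: "1 \<le> a" "a < b" using p e by (auto simp: a_def b_def S_def)
  have sub: "c \<in> A n" if "a \<le> c" "c \<le> b" for c
  proof -
    have "c \<in> S" using that by (auto simp: a_def b_def S_def)
    moreover have "dist c p < e" using that e by (auto simp: a_def b_def dist_real_def)
    ultimately show ?thesis using e(2)[of c] by blast
  qed
  show ?thesis
    apply (rule exI[of _ a], rule exI[of _ b], rule exI[of _ "1 / Suc n"], rule exI[of _ K0])
    using ab K0 sub by (auto simp: A_def)
qed

lemma uct: assumes m: "0 < m" "m \<le> M"
  shows "\<exists>C>0. \<exists>\<delta>>0. \<forall>y r. 0 < y \<and> y < \<delta> \<and> m \<le> r \<and> r \<le> M \<longrightarrow> f (r * y) \<le> C * f y"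
proof -
  obtain a b \<delta>0 K0 where ab: "1 \<le> a" "a < b" "\<delta>0 > 0" "K0 > 0"
    and H: "\<And>c v. a \<le> c \<Longrightarrow> c \<le> b \<Longrightarrow> 0 < v \<Longrightarrow> v < \<delta>0 \<Longrightarrow> f (c * v) \<le> K0 * f v \<and> f v \<le> K0 * f (c * v)"
    using baire_interval by blast
  define l where "l = b / a"
  have l: "l > 1" using ab by (simp add: l_def)
  have step: "f (\<rho> * u) \<le> K0 * K0 * f u" if r: "1/l \<le> \<rho>" "\<rho> \<le> l" and u: "0 < u" "u < \<delta>0" for \<rho> u
  proof (cases "\<rho> \<ge> 1")
    case True
    define c where "c = a * \<rho>"
    have c: "a \<le> c" "c \<le> b" using True r ab by (auto simp: c_def l_def field_simps)
    have ua: "0 < u / a" "u / a < \<delta>0" using u ab by (auto simp: divide_less_eq) (smt (verit) mult_le_cancel_left1)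
    have e1: "f (\<rho> * u) = f (c * (u / a))" using ab by (simp add: c_def)
    have "f (c * (u / a)) \<le> K0 * f (u / a)" using H[OF c ua] by auto
    moreover have "f (u / a) \<le> K0 * f u" using H[of a "u/a"] ua ab by auto
    then have "K0 * f (u / a) \<le> K0 * (K0 * f u)" using ab by (intro mult_left_mono) auto
    ultimately show ?thesis using e1 by (simp add: ac_simps)
  next
    case False
    have rp: "\<rho> > 0" using r l by (smt (verit) divide_pos_pos)
    define c where "c = a / \<rho>"
    have c: "a \<le> c" "c \<le> b" using False r rp ab
      by (auto simp: c_def l_def field_simps)
    have cp: "c > 0" using c ab by auto
    have uc: "0 < u / c" "u / c < \<delta>0"
    proof -
      show "0 < u / c" using u cp by simp
      have "u / c \<le> u" using u c ab by (simp add: divide_le_eq)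
      then show "u / c < \<delta>0" using u by simp
    qed
    have e1: "f (\<rho> * u) = f (a * (u / c))" using ab rp by (simp add: c_def mult.commute)
    have "f (a * (u / c)) \<le> K0 * f (u / c)" using H[of a "u/c"] uc ab by auto
    moreover have "f (u / c) \<le> K0 * f u" using H[OF c uc] cp by auto
    then have "K0 * f (u / c) \<le> K0 * (K0 * f u)" using ab by (intro mult_left_mono) auto
    ultimately show ?thesis using e1 by (simp add: ac_simps)
  qed
  have ind: "\<forall>\<rho> u. 1 / l^n \<le> \<rho> \<and> \<rho> \<le> l^n \<and> 0 < u \<and> u < \<delta>0 / l^n \<longrightarrow> f (\<rho> * u) \<le> (K0 * K0)^n * f u" for n
  proof (induction n)
    case 0
    then show ?case by auto
  next
    case (Suc n)
    show ?case
    proof (intro allI impI)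
      fix \<rho> u assume A: "1 / l^Suc n \<le> \<rho> \<and> \<rho> \<le> l^Suc n \<and> 0 < u \<and> u < \<delta>0 / l^Suc n"
      have lp: "l^n > 0" "l^n \<ge> 1" using l by auto
      define \<rho>2 where "\<rho>2 = max (1 / l^n) (min (l^n) \<rho>)"
      have lpp: "1 \<le> l^n * l^n" using lp(2) mult_mono[of 1 "l^n" 1 "l^n"] by auto
      have r2: "1 / l^n \<le> \<rho>2" "\<rho>2 \<le> l^n" using lp lpp by (auto simp: \<rho>2_def divide_le_eq)
      have r2p: "\<rho>2 > 0" using r2 lp by (smt (verit) divide_pos_pos)
      define \<rho>1 where "\<rho>1 = \<rho> / \<rho>2"
      have r1c: "1 / l \<le> \<rho>1 \<and> \<rho>1 \<le> l"
      proof -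
        have rp: "\<rho> > 0" using A l by (smt (verit) divide_pos_pos zero_less_power)
        consider "\<rho> < 1 / l^n" | "1 / l^n \<le> \<rho> \<and> \<rho> \<le> l^n" | "\<rho> > l^n" by linarith
        then show "1 / l \<le> \<rho>1 \<and> \<rho>1 \<le> l"
        proof cases
          case 1
          then have "\<rho>2 = 1 / l^n" using lp by (auto simp: \<rho>2_def divide_le_eq)
          then have "\<rho>1 = \<rho> * l^n" by (simp add: \<rho>1_def)
          moreover have "1 / l^Suc n \<le> \<rho>" using A by auto
          ultimately show "1 / l \<le> \<rho>1 \<and> \<rho>1 \<le> l" using 1 l lp
            by (auto simp: field_simps)
        next
          case 2
          then have "\<rho>2 = \<rho>" by (auto simp: \<rho>2_def)
          then have "\<rho>1 = 1" using rp by (simp add: \<rho>1_def)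
          then show "1 / l \<le> \<rho>1 \<and> \<rho>1 \<le> l" using l by auto
        next
          case 3
          then have "\<rho>2 = l^n" using lp lpp by (auto simp: \<rho>2_def divide_le_eq)
          then have "\<rho>1 = \<rho> / l^n" by (simp add: \<rho>1_def)
          moreover have "\<rho> \<le> l^Suc n" using A by auto
          ultimately have "1 < \<rho>1" "\<rho>1 \<le> l" using 3 l lp
            by (auto simp: field_simps)
          moreover have "1 / l \<le> 1" using l by simp
          ultimately show "1 / l \<le> \<rho>1 \<and> \<rho>1 \<le> l" by linarith
        qed
      qed
      then have r1: "1 / l \<le> \<rho>1" "\<rho>1 \<le> l" by auto
      have u2: "0 < \<rho>2 * u" "\<rho>2 * u < \<delta>0"
      proof -
        show "0 < \<rho>2 * u" using r2p A by simp
        have "\<rho>2 * u \<le> l^n * u" using r2 A by (intro mult_right_mono) auto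
        also have "l^n * u < l^n * (\<delta>0 / l^Suc n)" using A lp by (intro mult_strict_left_mono) auto
        also have "l^n * (\<delta>0 / l^Suc n) = \<delta>0 / l" using lp by (simp add: field_simps)
        also have "\<dots> < \<delta>0" using l ab by (simp add: divide_less_eq)
        finally show "\<rho>2 * u < \<delta>0" .
      qed
      have "f (\<rho> * u) = f (\<rho>1 * (\<rho>2 * u))" using r2p by (simp add: \<rho>1_def)
      also have "\<dots> \<le> K0 * K0 * f (\<rho>2 * u)" by (rule step[OF r1 u2])
      also have "f (\<rho>2 * u) \<le> (K0 * K0)^n * f u"
      proof -
        have "u < \<delta>0 / l^n"
        proof -
          have "\<delta>0 / l^Suc n \<le> \<delta>0 / l^n" using l ab lp
            by (intro divide_left_mono) (auto simp: field_simps)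
          then show ?thesis using A by linarith
        qed
        then show ?thesis using Suc.IH r2 A by auto
      qed
      then have "K0 * K0 * f (\<rho>2 * u) \<le> K0 * K0 * ((K0 * K0)^n * f u)"
        using ab by (intro mult_left_mono) auto
      finally show "f (\<rho> * u) \<le> (K0 * K0) ^ Suc n * f u" by (simp add: ac_simps)
    qed
  qed
  obtain n where n: "max M (1/m) < l^n" using real_arch_pow[OF l] by blast
  have lp: "l^n > 0" using l by auto
  show ?thesis
  proof (intro exI conjI allI impI)
    show "(K0 * K0)^n > 0" using ab by simp
    show "\<delta>0 / l^n > 0" using ab lp by simp
    fix y r assume A: "0 < y \<and> y < \<delta>0 / l^n \<and> m \<le> r \<and> r \<le> M"
    have "1 / l^n \<le> r"
    proof -
      have "1 / m < l^n" using n by auto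
      then have "1 / l^n < m" using m lp by (simp add: field_simps)
      then show ?thesis using A by linarith
    qed
    moreover have "r \<le> l^n" using A n by auto
    ultimately show "f (r * y) \<le> (K0 * K0)^n * f y" using ind[of n] A by blast
  qed
qed

end



lemma barrier:
  fixes q :: "real \<Rightarrow> real"
  assumes cont: "continuous_on {T..} q"
    and der: "\<And>t. t \<ge> T \<Longrightarrow> q t = 0 \<Longrightarrow> \<exists>d. (q has_real_derivative d) (at t) \<and> d < 0"
    and uu: "T \<le> uu" "q uu \<le> 0"
    and ww: "uu \<le> ww"
  shows "q ww \<le> 0"
proof (rule ccontr)
  assume q2: "\<not> q ww \<le> 0"
  define S where "S = {uu..ww} \<inter> q -` {..0}"
  have c12: "continuous_on {uu..ww} q"
    by (rule continuous_on_subset[OF cont]) (use uu in auto)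
  have "closed S" unfolding S_def
    by (rule continuous_closed_preimage[OF c12]) auto
  then have "compact S" unfolding S_def
    by (metis S_def compact_Icc compact_Int_closed inf.absorb_iff2 inf_le1 inf.assoc)
  moreover have "uu \<in> S" using uu ww by (auto simp: S_def)
  ultimately obtain s where sS: "s \<in> S" and smax: "\<And>t. t \<in> S \<Longrightarrow> t \<le> s"
    using compact_attains_sup[of S] by blast
  have s: "uu \<le> s" "s \<le> ww" "q s \<le> 0" using sS by (auto simp: S_def)
  have "s < ww" using s q2 by (cases "s = ww") auto
  have qs0: "q s = 0"
  proof (rule ccontr)
    assume "q s \<noteq> 0"
    then have "q s < 0" using s by auto
    have "continuous_on {s..ww} q" by (rule continuous_on_subset[OF c12]) (use s in auto)
    then obtain r where r: "s \<le> r" "r \<le> ww" "q r = 0"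
      using IVT'[of q s 0 ww] \<open>q s < 0\<close> q2 s by auto
    then have "r \<in> S" using s by (auto simp: S_def)
    then have "r \<le> s" by (rule smax)
    then show False using r \<open>q s \<noteq> 0\<close> by auto
  qed
  obtain d where d: "(q has_real_derivative d) (at s)" "d < 0"
    using der[of s] qs0 s uu by auto
  obtain e where e: "e > 0" "\<And>h. h > 0 \<Longrightarrow> h < e \<Longrightarrow> q s > q (s + h)"
    using DERIV_neg_dec_right[OF d] by blast
  define h where "h = min (e/2) (ww - s)"
  have h: "h > 0" "h < e" "s + h \<le> ww" using e \<open>s < ww\<close> by (auto simp: h_def)
  have "s + h \<in> S" using e(2)[OF h(1,2)] qs0 h s by (auto simp: S_def)
  then show False using smax h by fastforce
qed


lemma main_prelim:
  fixes f g x :: "real \<Rightarrow> real" and \<xi> :: real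
  assumes f0: "f 0 = 0"
    and g_pos: "\<And>t. t > 0 \<Longrightarrow> g t > 0"
    and \<xi>_pos: "\<xi> > 0"
    and x_init: "x 0 = \<xi>"
    and x_ode: "\<And>t. t \<ge> 0 \<Longrightarrow> (x has_real_derivative (- f (x t) + g t)) (at t within {0..})"
  shows "\<And>t. t > 0 \<Longrightarrow> (x has_real_derivative (- f (x t) + g t)) (at t)"
    and "\<And>t. t \<ge> 0 \<Longrightarrow> x t > 0"
proof -
  have xcont: "continuous_on {0..} x"
    by (rule DERIV_continuous_on[OF x_ode]) auto
  show xder: "(x has_real_derivative (- f (x t) + g t)) (at t)" if "t > 0" for t
  proof -
    have i: "at t within {0..} = at t"
      by (rule at_within_interior) (use that in \<open>simp add: interior_real_atLeast\<close>)
    have "(x has_real_derivative (- f (x t) + g t)) (at t within {0..})" using x_ode that by simp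
    then show ?thesis by (simp only: i)
  qed
  have nn: "x t \<ge> 0" if "t \<ge> 0" for t
  proof -
    have "(\<lambda>t. - x t) t \<le> 0"
    proof (rule barrier[where q="\<lambda>t. - x t" and T=0 and uu=0 and ww=t])
      show "continuous_on {0..} (\<lambda>t. - x t)" by (intro continuous_intros xcont)
      fix s assume s: "s \<ge> 0" "- x s = 0"
      then have "s > 0" using x_init \<xi>_pos by (cases "s = 0") auto
      then have "x s = 0" "g s > 0" using s g_pos by auto
      show "\<exists>d. ((\<lambda>t. - x t) has_real_derivative d) (at s) \<and> d < 0"
      proof (intro exI conjI)
        show "((\<lambda>t. - x t) has_real_derivative -(- f (x s) + g s)) (at s)"
          by (rule DERIV_minus[OF xder[OF \<open>s > 0\<close>]])
        show "-(- f (x s) + g s) < 0" using \<open>x s = 0\<close> \<open>g s > 0\<close> f0 by simp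
      qed
    next
      show "(0::real) \<le> 0" by simp
      show "- x 0 \<le> 0" using x_init \<xi>_pos by simp
      show "0 \<le> t" using that by simp
    qed
    then show ?thesis by simp
  qed
  show "x t > 0" if t: "t \<ge> 0" for t
  proof (rule ccontr)
    assume "\<not> x t > 0"
    then have xt: "x t = 0" using nn[OF t] by auto
    then have tp: "t > 0" using x_init \<xi>_pos t by (cases "t = 0") auto
    have "g t > 0" using g_pos tp by auto
    then obtain d where d: "d > 0" "\<And>h. h > 0 \<Longrightarrow> h < d \<Longrightarrow> x (t - h) < x t"
      using DERIV_pos_inc_left[OF xder[OF tp]] xt f0 by auto
    define h where "h = min (d/2) t"
    have "x (t - h) < 0" using d(2)[of h] d tp xt by (auto simp: h_def)
    moreover have "x (t - h) \<ge> 0" by (rule nn) (auto simp: h_def)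
    ultimately show False by simp
  qed
qed




locale sol = fctx f \<beta> for f :: "real \<Rightarrow> real" and \<beta> :: real +
  fixes g x :: "real \<Rightarrow> real"
  assumes gpos: "\<And>t. t > 0 \<Longrightarrow> g t > 0"
    and xpos: "\<And>t. t \<ge> 0 \<Longrightarrow> x t > 0"
    and xder: "\<And>t. t > 0 \<Longrightarrow> (x has_real_derivative (- f (x t) + g t)) (at t)"
    and xlim: "(x \<longlongrightarrow> 0) at_top"
    and gof: "filterlim (\<lambda>t. g t / f (Finv f t)) at_top at_top"
begin

lemma zder: "t > 0 \<Longrightarrow> ((\<lambda>t. Fint f (x t)) has_real_derivative (1 - g t / f (x t))) (at t)"
proof -
  assume t: "t > 0"
  have fx: "f (x t) > 0" using fpos xpos t by auto
  show ?thesis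
    by (rule DERIV_cong[OF DERIV_chain2[OF Fd xder[OF t]]]) (use xpos t fx in \<open>auto simp: field_simps\<close>)
qed

lemma x_small: "e > 0 \<Longrightarrow> eventually (\<lambda>t. x t < e) at_top"
  using order_tendstoD(2)[OF xlim] by auto

lemma z_nonneg_ev: "eventually (\<lambda>t. Fint f (x t) \<ge> 0) at_top"
proof -
  have "eventually (\<lambda>t. x t < 1) at_top" by (rule x_small) simp
  then have "eventually (\<lambda>t. x t < 1 \<and> t \<ge> 0) at_top"
    using eventually_ge_at_top[of 0] by eventually_elim auto
  then show ?thesis by eventually_elim (use xpos in \<open>auto intro!: F_nonneg\<close>)
qed

lemma z_upper: assumes "t \<ge> 1" shows "Fint f (x t) \<le> Fint f (x 1) + (t - 1)"
proof -
  have "(\<lambda>s. Fint f (x s) - s) t \<le> (\<lambda>s. Fint f (x s) - s) 1"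
  proof (rule deriv_nonpos_imp_antimono[where g="\<lambda>s. Fint f (x s) - s" and a=1 and b=t and g' = "\<lambda>s. (1 - g s / f (x s)) - 1"])
    fix s assume s: "s \<in> {1..t}"
    show "((\<lambda>s. Fint f (x s) - s) has_real_derivative (1 - g s / f (x s)) - 1) (at s)"
      using s by (intro DERIV_diff zder) (auto intro: DERIV_ident)
    have "g s > 0" "f (x s) > 0" using s gpos xpos fpos by auto
    then show "(1 - g s / f (x s)) - 1 \<le> 0" by simp
  qed (use assms in auto)
  then show ?thesis by simp
qed

end



context sol
begin

lemma gof_ev: "eventually (\<lambda>t. Z \<le> g t / f (Finv f t)) at_top"
  using gof unfolding filterlim_at_top by blast

lemma key: assumes M: "M > 0" shows "eventually (\<lambda>t. Fint f (x t / M) \<le> t) at_top"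
proof -
  define K where "K = 2 * M powr \<beta>"
  have K: "K > M powr \<beta>" using M by (simp add: K_def)
  have Kp: "K > 0" using M by (simp add: K_def)
  obtain \<delta>1 where d1: "\<delta>1 > 0" "\<And>u. 0 < u \<and> u < \<delta>1 \<Longrightarrow> f (M * u) \<le> K * f u"
    using ratio_upper[OF M K] by auto
  have "eventually (\<lambda>t. K + 1 \<le> g t / f (Finv f t)) at_top" by (rule gof_ev)
  moreover have "eventually (\<lambda>t. x t < M * \<delta>1) at_top" using M d1 by (intro x_small) simp
  ultimately have "eventually (\<lambda>t. K < g t / f (Finv f t) \<and> x t < M * \<delta>1) at_top"
    by eventually_elim auto
  then obtain N where N: "\<And>t. t \<ge> N \<Longrightarrow> K < g t / f (Finv f t) \<and> x t < M * \<delta>1"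
    unfolding eventually_at_top_linorder by blast
  define T1 where "T1 = max N 1"
  have T1: "T1 \<ge> 1" "\<And>t. t \<ge> T1 \<Longrightarrow> K < g t / f (Finv f t) \<and> x t < M * \<delta>1"
    using N by (auto simp: T1_def)
  define q where "q = (\<lambda>t. Fint f (x t / M) - t)"
  have qder: "(q has_real_derivative (-(1 / f (x t / M)) * ((- f (x t) + g t) / M) - 1)) (at t)"
    if t: "t > 0" for t
  proof -
    have xp: "x t / M > 0" using xpos t M by auto
    have "((\<lambda>t. x t / M) has_real_derivative (- f (x t) + g t) / M) (at t)"
      by (rule DERIV_cdivide[OF xder[OF t]])
    from DERIV_chain2[OF Fd[OF xp] this]
    have "((\<lambda>t. Fint f (x t / M)) has_real_derivative -(1 / f (x t / M)) * ((- f (x t) + g t) / M)) (at t)" .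
    then show ?thesis unfolding q_def by (intro DERIV_diff) (auto intro: DERIV_ident)
  qed
  have qcont: "continuous_on {T1..} q"
    by (rule continuous_at_imp_continuous_on) (use T1 in \<open>auto intro!: DERIV_isCont qder\<close>)
  have qneg: "\<exists>d. (q has_real_derivative d) (at t) \<and> d < 0" if t: "t \<ge> T1" "q t = 0" for t
  proof -
    have tp: "t > 0" using t T1 by auto
    define v where "v = x t / M"
    have vp: "v > 0" using xpos tp M by (auto simp: v_def)
    have Fv: "Fint f v = t" using t by (simp add: q_def v_def)
    have "Finv f t = v" using Finv_eq[OF vp] Fv by simp
    then have "K < g t / f v" using T1(2)[OF t(1)] by simp
    then have "K * f v < g t" using fpos[OF vp] by (simp add: less_divide_eq)
    moreover have "v < \<delta>1" using T1(2)[OF t(1)] M by (simp add: v_def divide_less_eq mult.commute)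
    then have "f (M * v) \<le> K * f v" using d1 vp by auto
    moreover have "M * v = x t" using M by (simp add: v_def)
    ultimately have pos: "- f (x t) + g t > 0" by simp
    have "(1 / f v) * ((- f (x t) + g t) / M) \<ge> 0"
      using pos fpos[OF vp] M by simp
    then have "-(1 / f (x t / M)) * ((- f (x t) + g t) / M) - 1 < 0" by (simp add: v_def)
    then show ?thesis using qder[OF tp] by blast
  qed
  show ?thesis
  proof (cases "\<exists>u\<ge>T1. q u \<le> 0")
    case True
    then obtain u where u: "u \<ge> T1" "q u \<le> 0" by blast
    have "q t \<le> 0" if "t \<ge> u" for t
      by (rule barrier[where q=q and T=T1 and uu=u and ww=t, OF qcont qneg u that]) auto
    then show ?thesis unfolding eventually_at_top_linorder q_def by auto
  next
    case False
    then have qpos: "\<And>t. t \<ge> T1 \<Longrightarrow> q t > 0" by auto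
    have False
    proof -
      define m where "m = (1/4::real) powr (1 / (\<beta> - 1))"
      have mpos: "m > 0" by (simp add: m_def)
      have mp: "m powr (\<beta> - 1) = 1/4"
        using bgt by (simp add: m_def powr_powr)
      have mb: "m powr \<beta> = m / 4"
      proof -
        have "m powr \<beta> = m powr (1 + (\<beta> - 1))" by simp
        also have "\<dots> = m powr 1 * m powr (\<beta> - 1)" by (rule powr_add)
        also have "\<dots> = m * m powr (\<beta> - 1)" using mpos by simp
        finally show ?thesis using mp by simp
      qed
      define Km where "Km = m / 2"
      have Km: "Km > m powr \<beta>" "Km > 0" using mb mpos by (auto simp: Km_def)
      obtain \<delta>m where dm0: "\<delta>m > 0" "\<And>u. 0 < u \<and> u < \<delta>m \<Longrightarrow> f (m * u) \<le> Km * f u"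
        using ratio_upper[OF mpos Km(1)] by auto
      define dm where "dm = \<delta>m / 2"
      have dm: "dm > 0" "dm < \<delta>m" using dm0 by (auto simp: dm_def)
      define B where "B = max (max 1 (Fint f dm + 1)) (Fint f (x 1) + 2 * Fint f dm - Fint f (m * dm))"
      have low: "m * Finv f t < x t" if t: "t \<ge> B" for t
      proof -
        have t0: "t \<ge> 0" "t \<ge> 1" using t by (auto simp: B_def)
        define y where "y = Finv f t"
        have y: "y > 0" "Fint f y = t" using Finv_props[OF t0(1)] by (auto simp: y_def)
        have ys: "y < dm" unfolding y_def by (rule Finv_small) (use dm t0 t in \<open>auto simp: B_def\<close>)
        have "Fint f (m * y) - Fint f (m * dm) \<ge> (m / Km) * (Fint f y - Fint f dm)"
        proof (rule scale_ge[OF mpos Km(2) y(1)])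
          show "y \<le> dm" using ys by simp
          fix u assume "y \<le> u" "u \<le> dm"
          then show "f (m * u) \<le> Km * f u" using dm0(2)[of u] y dm by auto
        qed
        moreover have "m / Km = 2" using mpos by (simp add: Km_def)
        ultimately have "Fint f (m * y) \<ge> Fint f (m * dm) + 2 * (t - Fint f dm)" using y by simp
        moreover have "Fint f (x t) \<le> Fint f (x 1) + (t - 1)" by (rule z_upper) (use t0 in simp)
        moreover have "t \<ge> Fint f (x 1) + 2 * Fint f dm - Fint f (m * dm)" using t by (simp add: B_def)
        ultimately have "Fint f (x t) < Fint f (m * y)" by argo
        then show ?thesis using F_less_iff[of "x t" "m * y"] xpos[of t] t0 mpos y by (simp add: y_def)
      qed
      obtain C \<delta>c where C: "C > 0" "\<delta>c > 0"
        and Cb: "\<And>y r. 0 < y \<and> y < \<delta>c \<and> m \<le> r \<and> r \<le> max m M \<Longrightarrow> f (r * y) \<le> C * f y"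
        using uct[OF mpos, of "max m M"] by auto
      have "eventually (\<lambda>t. 2 * C \<le> g t / f (Finv f t)) at_top" by (rule gof_ev)
      moreover have "eventually (\<lambda>t. t \<ge> max (max B T1) (max 0 (Fint f \<delta>c + 1))) at_top"
        by (rule eventually_ge_at_top)
      ultimately have "eventually (\<lambda>t. 1 - g t / f (x t) \<le> -1) at_top"
      proof eventually_elim
        case (elim t)
        have t0: "t \<ge> 0" "t \<ge> B" "t \<ge> T1" "t > Fint f \<delta>c" using elim by auto
        have tp: "t > 0" using t0 T1 by auto
        define y where "y = Finv f t"
        have y: "y > 0" "Fint f y = t" using Finv_props[OF t0(1)] by (auto simp: y_def)
        have yc: "y < \<delta>c" unfolding y_def by (rule Finv_small) (use C t0 in auto)
        have "q t > 0" by (rule qpos) (use t0 in simp)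
        then have "Fint f y < Fint f (x t / M)" using y by (simp add: q_def)
        then have "x t / M < y" using F_less_iff[of y "x t / M"] y xpos[of t] M t0 by simp
        then have up: "x t < M * y" using M by (simp add: divide_less_eq mult.commute)
        have lo: "m * y < x t" using low[OF t0(2)] by (simp add: y_def)
        define r where "r = x t / y"
        have mm: "M * y \<le> max m M * y" using y by (intro mult_right_mono) auto
        have r1: "m \<le> r" using lo y by (simp add: r_def field_simps)
        have "x t \<le> max m M * y" using up mm by linarith
        then have r2: "r \<le> max m M" using y by (simp add: r_def divide_le_eq)
        note r = r1 r2
        have "f (r * y) \<le> C * f y" using Cb[of y r] y yc r by auto
        then have fx: "f (x t) \<le> C * f y" using y by (simp add: r_def)
        have fy: "f y > 0" using fpos y by auto
        have fxp: "f (x t) > 0" using fpos xpos t0 by auto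
        have "2 * C * f y \<le> g t" using elim fy by (simp add: y_def le_divide_eq)
        then have "2 * f (x t) \<le> g t" using fx by linarith
        then have "2 \<le> g t / f (x t)" using fxp by (simp add: le_divide_eq)
        then show ?case by simp
      qed
      then obtain N3 where N3: "\<And>t. t \<ge> N3 \<Longrightarrow> 1 - g t / f (x t) \<le> -1"
        unfolding eventually_at_top_linorder by blast
      obtain N4 where N4: "\<And>t. t \<ge> N4 \<Longrightarrow> Fint f (x t) \<ge> 0"
        using z_nonneg_ev unfolding eventually_at_top_linorder by blast
      define T3 where "T3 = max N3 1"
      define t where "t = max (max T3 N4) (Fint f (x T3) + T3 + 1)"
      have tt: "t \<ge> T3" "t \<ge> N4" "t \<ge> Fint f (x T3) + T3 + 1" by (auto simp: t_def)
      have "(\<lambda>s. Fint f (x s) + s) t \<le> (\<lambda>s. Fint f (x s) + s) T3"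
      proof (rule deriv_nonpos_imp_antimono[where g="\<lambda>s. Fint f (x s) + s" and a=T3 and b=t
            and g' = "\<lambda>s. (1 - g s / f (x s)) + 1"])
        fix s assume s: "s \<in> {T3..t}"
        then have sp: "s > 0" "s \<ge> N3" by (auto simp: T3_def)
        show "((\<lambda>s. Fint f (x s) + s) has_real_derivative (1 - g s / f (x s)) + 1) (at s)"
          by (intro DERIV_add zder sp) (auto intro: DERIV_ident)
        show "(1 - g s / f (x s)) + 1 \<le> 0" using N3[OF sp(2)] by simp
      qed (use tt in auto)
      then have "Fint f (x t) \<le> -1" using tt by simp
      moreover have "Fint f (x t) \<ge> 0" using N4 tt by auto
      ultimately show False by simp
    qed
    then show ?thesis by simp
  qed
qed

end



context sol
begin

lemma claim1: "filterlim (\<lambda>t. x t / Finv f t) at_top at_top"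
  unfolding filterlim_at_top
proof
  fix Z :: real
  define M where "M = max Z 1"
  have M: "M > 0" by (simp add: M_def)
  have "eventually (\<lambda>t. Fint f (x t / M) \<le> t \<and> t \<ge> 0) at_top"
    using key[OF M] eventually_ge_at_top[of 0] by eventually_elim auto
  then show "eventually (\<lambda>t. Z \<le> x t / Finv f t) at_top"
  proof eventually_elim
    case (elim t)
    define y where "y = Finv f t"
    have y: "y > 0" "Fint f y = t" using Finv_props[of t] elim by (auto simp: y_def)
    have xp: "x t / M > 0" using xpos elim M by auto
    have "Fint f (x t / M) \<le> Fint f y" using elim y by simp
    then have "y \<le> x t / M" using F_le_iff[OF xp y(1)] by simp
    then have "M * y \<le> x t" using M by (simp add: le_divide_eq mult.commute)
    then have "M \<le> x t / y" using y by (simp add: le_divide_eq)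
    then show ?case by (simp add: y_def M_def)
  qed
qed

lemma claim2: "((\<lambda>t. Fint f (x t) / t) \<longlongrightarrow> 0) at_top"
proof (rule order_tendstoI)
  fix a :: real assume a: "a < 0"
  show "eventually (\<lambda>t. a < Fint f (x t) / t) at_top"
    using z_nonneg_ev eventually_gt_at_top[of 0]
  proof eventually_elim
    case (elim t) then show ?case using a by (smt (verit) divide_nonneg_pos)
  qed
next
  fix a :: real assume a: "0 < a"
  define M where "M = (a/4) powr (1 / (1 - \<beta>))"
  have M: "M > 0" using a by (simp add: M_def)
  have Mp: "M powr (1 - \<beta>) = a / 4" using a bgt by (simp add: M_def powr_powr)
  have MM: "M powr (1 - \<beta>) * M powr \<beta> = M"
    using powr_add[of M "1 - \<beta>" \<beta>, symmetric] M by simp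
  have Mb: "M powr \<beta> > 0" using M by simp
  define k where "k = M powr \<beta> / 2"
  have k: "k > 0" "k < M powr \<beta>" using Mb by (auto simp: k_def)
  have Mk: "M / k = a / 2"
  proof -
    have "M = (a/4) * M powr \<beta>" using MM Mp by simp
    then show ?thesis using Mb by (simp add: k_def field_simps)
  qed
  obtain \<delta> where d0: "\<delta> > 0" "\<And>u. 0 < u \<and> u < \<delta> \<Longrightarrow> k * f u \<le> f (M * u)"
    using ratio_lower[OF M k(2)] by auto
  define d where "d = \<delta> / 2"
  have d: "d > 0" "d < \<delta>" using d0 by (auto simp: d_def)
  define C' where "C' = Fint f (M * d) - (a/2) * Fint f d"
  have "eventually (\<lambda>t. x t < M * d) at_top" using M d by (intro x_small) simp
  moreover have "eventually (\<lambda>t. t \<ge> max 1 (2 * (\<bar>C'\<bar> + 1) / a)) at_top" by (rule eventually_ge_at_top)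
  ultimately show "eventually (\<lambda>t. Fint f (x t) / t < a) at_top"
    using key[OF M]
  proof eventually_elim
    case (elim t)
    have tp: "t > 0" using elim by auto
    define v where "v = x t / M"
    have v: "0 < v" "v \<le> d" using xpos[of t] tp elim M
      by (auto simp: v_def divide_le_eq mult.commute)
    have "Fint f (M * v) - Fint f (M * d) \<le> (M / k) * (Fint f v - Fint f d)"
    proof (rule scale_le[OF M k(1) v])
      fix u assume "v \<le> u" "u \<le> d"
      then show "k * f u \<le> f (M * u)" using d0(2)[of u] v d by auto
    qed
    moreover have "M * v = x t" using M by (simp add: v_def)
    ultimately have "Fint f (x t) \<le> Fint f (M * d) + (a/2) * (Fint f v - Fint f d)" using Mk by simp
    moreover have "(a/2) * Fint f v \<le> (a/2) * t" using elim a by (intro mult_left_mono) (auto simp: v_def)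
    ultimately have "Fint f (x t) \<le> C' + (a/2) * t" by (simp add: C'_def algebra_simps)
    moreover have "(a/2) * t > C'"
    proof -
      have "t \<ge> 2 * (\<bar>C'\<bar> + 1) / a" using elim by auto
      then have "a * t \<ge> 2 * (\<bar>C'\<bar> + 1)" using a by (simp add: divide_le_eq mult.commute)
      moreover have "a / 2 * t = (a * t) / 2" by simp
      moreover have "C' \<le> \<bar>C'\<bar>" by simp
      ultimately show ?thesis by argo
    qed
    ultimately have "Fint f (x t) < a * t" by linarith
    then show ?case using tp by (simp add: divide_less_eq)
  qed
qed

end

theorem mainTheorem10:
  fixes f g x :: "real \<Rightarrow> real" and \<xi> \<beta> \<theta> :: real
  assumes f_cont: "continuous_on UNIV f"
    and f_lip: "loc_lipschitz f"
    and f0: "f 0 = 0"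
    and f_sign: "\<And>u. u \<noteq> 0 \<Longrightarrow> u * f u > 0"
    and g_cont: "continuous_on {0..} g"
    and g_pos: "\<And>t. t > 0 \<Longrightarrow> g t > 0"
    and \<xi>_pos: "\<xi> > 0"
    and x_init: "x 0 = \<xi>"
    and x_ode: "\<And>t. t \<ge> 0 \<Longrightarrow> (x has_real_derivative (- f (x t) + g t)) (at t within {0..})"
    and x_lim: "(x \<longlongrightarrow> 0) at_top"
    and g_over_f: "filterlim (\<lambda>t. g t / f (Finv f t)) at_top at_top"
    and f_RV: "RV0 f \<beta>" and \<beta>_gt: "\<beta> > 1"
    and g_RV: "RVinf g (- \<theta>)"
    and cases: "\<theta> > 0 \<or> (\<theta> = 0 \<and> (\<exists>d. antimono_on {0..} d \<and> g \<sim>[at_top] d))"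
  shows "filterlim (\<lambda>t. x t / Finv f t) at_top at_top \<and>
         ((\<lambda>t. Fint f (x t) / t) \<longlongrightarrow> 0) at_top"
proof -
  have fpos: "f u > 0" if "u > 0" for u
    using f_sign[of u] that by (simp add: zero_less_mult_iff)
  have frv: "((\<lambda>u. f (c * u) / f u) \<longlongrightarrow> c powr \<beta>) (at_right 0)" if "c > 0" for c
    using f_RV that unfolding RV0_def by blast
  interpret fctx f \<beta>
    by unfold_locales (use f_cont fpos frv \<beta>_gt in auto)
  note P = main_prelim[of f g \<xi> x, OF f0 g_pos \<xi>_pos x_init x_ode]
  interpret sol f \<beta> g x
    by unfold_locales (use g_pos P x_lim g_over_f in auto)
  show ?thesis using claim1 claim2 by blast
qed


end
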